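(* Let $\mathscr{X}$ be a complex Banach space and $\mathscr{M}_1,\mathscr{M}_2,\mathscr{M}_3$ closed subspaces such that $\mathscr{X}=\mathscr{M}_i\oplus\mathscr{M}_j$ for all $i\neq j$. Let $V_1\colon\mathscr{M}_2\to\mathscr{M}_3$, $V_2\colon\mathscr{M}_1\to\mathscr{M}_3$, $V_3\colon\mathscr{M}_1\to\mathscr{M}_2$ be isomorphisms with $\mathscr{M}_1=\{x+V_1x:x\in\mathscr{M}_2\}$, $\mathscr{M}_2=\{x+V_2x:x\in\mathscr{M}_1\}$, $\mathscr{M}_3=\{x+V_3x:x\in\mathscr{M}_1\}$, and define $W_1,W_2,W_3\in\mathcal{B}(\mathscr{X})$ by $W_1(x_2+x_3)=V_1^{-1}x_3+V_1x_2$ ($x_2\in\mathscr{M}_2,x_3\in\mathscr{M}_3$), $W_2(x_1+x_3)=V_2^{-1}x_3+V_2x_1$ ($x_1\in\mathscr{M}_1,x_3\in\mathscr{M}_3$), $W_3(x_1+x_2)=V_3^{-1}x_2+V_3x_1$ ($x_1\in\mathscr{M}_1,x_2\in\mathscr{M}_2$). Let $\mathfrak{D}=\{\{0\},\mathscr{M}_1,\mathscr{M}_2,\mathscr{X}\}$ and $\mathfrak{T}=\{\{0\},\mathscr{M}_1,\mathscr{M}_2,\mathscr{M}_3,\mathscr{X}\}$. Then $\mathrm{Col}(\mathfrak{D})=\mathrm{Grp}(\mathrm{Alg}(\mathfrak{D}))\rtimes\mathcal{O}(\mathfrak{D})$ and $\mathrm{Col}(\mathfrak{T})=\mathrm{Grp}(\mathrm{Alg}(\mathfrak{T}))\rtimes\mathcal{O}(\mathfrak{T})$,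 where $\mathcal{O}(\mathfrak{D})=\{I,W_3\}$ and $\mathcal{O}(\mathfrak{T})=\{I,W_1,W_2,W_3,W_1W_2,W_2W_1\}$.
   Context: $\mathscr{X}=\mathscr{M}\oplus\mathscr{N}$ means $\mathscr{M}\cap\mathscr{N}=\{0\}$ and $\mathscr{M}+\mathscr{N}=\mathscr{X}$. $\mathrm{Alg}(\mathfrak{F})$ is the set of bounded operators leaving every subspace of $\mathfrak{F}$ invariant; $\mathrm{Grp}(\mathcal{A})$ is the group of invertible $S\in\mathcal{A}$ with $S^{-1}\in\mathcal{A}$. $\mathrm{Col}(\mathfrak{F})$ is the group of invertible $S\in\mathcal{B}(\mathscr{X})$ such that for every closed subspace $\mathscr{M}$: $\mathscr{M}\in\mathfrak{F}$ iff $S\mathscr{M}\in\mathfrak{F}$. For a subgroup $\mathcal{O}\subseteq\mathrm{Col}(\mathfrak{F})$, the notation $\mathrm{Col}(\mathfrak{F})=\mathrm{Grp}(\mathrm{Alg}(\mathfrak{F}))\rtimes\mathcal{O}$ means $\mathcal{O}$ is a subgroup of $\mathrm{Col}(\mathfrak{F})$ with $\mathrm{Col}(\mathfrak{F})=\{AT:A\in\mathrm{Grp}(\mathrm{Alg}(\mathfrak{F})),T\in\mathcal{O}\}$ and $\mathrm{Grp}(\mathrm{Alg}(\mathfrak{F}))\cap\mathcal{O}=\{I\}$. *)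

theory Defs
  imports "HOL-Analysis.Analysis"
begin

class complex_normed_vector = real_normed_vector +
  fixes scaleC :: "complex \<Rightarrow> 'a \<Rightarrow> 'a"
  assumes scaleC_add_right: "scaleC a (x + y) = scaleC a x + scaleC a y"
    and scaleC_add_left: "scaleC (a + b) x = scaleC a x + scaleC b x"
    and scaleC_scaleC: "scaleC a (scaleC b x) = scaleC (a * b) x"
    and scaleC_one: "scaleC 1 x = x"
    and scaleC_of_real: "scaleC (complex_of_real r) x = scaleR r x"
    and norm_scaleC: "norm (scaleC a x) = cmod a * norm x"

class complex_banach = complex_normed_vector + complete_space

definition cblin :: "('a::complex_normed_vector \<Rightarrow> 'b::complex_normed_vector) \<Rightarrow> bool" where
  "cblin T \<longleftrightarrow> bounded_linear T \<and> (\<forall>c x. T (scaleC c x) = scaleC c (T x))"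

definition csubspace :: "'a::complex_normed_vector set \<Rightarrow> bool" where
  "csubspace M \<longleftrightarrow> 0 \<in> M \<and> (\<forall>x\<in>M. \<forall>y\<in>M. x + y \<in> M) \<and> (\<forall>c. \<forall>x\<in>M. scaleC c x \<in> M)"

definition closed_csubspace :: "'a::complex_normed_vector set \<Rightarrow> bool" where
  "closed_csubspace M \<longleftrightarrow> closed M \<and> csubspace M"

definition direct_sum :: "'a::complex_normed_vector set \<Rightarrow> 'a set \<Rightarrow> bool" where
  "direct_sum M N \<longleftrightarrow> M \<inter> N = {0} \<and> {x + y | x y. x \<in> M \<and> y \<in> N} = UNIV"

text \<open>Topological isomorphism from the subspace \<open>M\<close> onto the subspace \<open>N\<close>
  (only the values of \<open>V\<close> on \<open>M\<close> matter).\<close>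
definition iso_on :: "'a::complex_normed_vector set \<Rightarrow> 'a set \<Rightarrow> ('a \<Rightarrow> 'a) \<Rightarrow> bool" where
  "iso_on M N V \<longleftrightarrow> bij_betw V M N
     \<and> (\<forall>x\<in>M. \<forall>y\<in>M. V (x + y) = V x + V y)
     \<and> (\<forall>c. \<forall>x\<in>M. V (scaleC c x) = scaleC c (V x))
     \<and> (\<exists>K. \<forall>x\<in>M. norm (V x) \<le> K * norm x)
     \<and> (\<exists>K. \<forall>y\<in>N. norm (inv_into M V y) \<le> K * norm y)"

definition Alg :: "'a::complex_normed_vector set set \<Rightarrow> ('a \<Rightarrow> 'a) set" where
  "Alg F = {T. cblin T \<and> (\<forall>M\<in>F. T ` M \<subseteq> M)}"

definition Grp :: "('a \<Rightarrow> 'a) set \<Rightarrow> ('a \<Rightarrow> 'a) set" where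
  "Grp A = {S \<in> A. bij S \<and> inv S \<in> A}"

definition Col :: "'a::complex_normed_vector set set \<Rightarrow> ('a \<Rightarrow> 'a) set" where
  "Col F = {S. cblin S \<and> bij S \<and> cblin (inv S) \<and>
      (\<forall>M. closed_csubspace M \<longrightarrow> (M \<in> F \<longleftrightarrow> S ` M \<in> F))}"

definition semidirect_Col :: "'a::complex_normed_vector set set \<Rightarrow> ('a \<Rightarrow> 'a) set \<Rightarrow> bool" where
  "semidirect_Col F Og \<longleftrightarrow>
     Og \<subseteq> Col F \<and> id \<in> Og \<and> (\<forall>S\<in>Og. \<forall>T\<in>Og. S \<circ> T \<in> Og) \<and> (\<forall>S\<in>Og. inv S \<in> Og)
     \<and> Col F = {A \<circ> T | A T. A \<in> Grp (Alg F) \<and> T \<in> Og}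
     \<and> Grp (Alg F) \<inter> Og = {id}"

end

theory Submission imports Defs begin

instance complex_banach \<subseteq> banach ..

lemma proj_bounded:
  fixes M N :: "'a::banach set"
  assumes cM: "closed M" and cN: "closed N"
    and M0: "0 \<in> M" and N0: "0 \<in> N"
    and Madd: "\<And>x y. x \<in> M \<Longrightarrow> y \<in> M \<Longrightarrow> x + y \<in> M"
    and Nadd: "\<And>x y. x \<in> N \<Longrightarrow> y \<in> N \<Longrightarrow> x + y \<in> N"
    and Msc: "\<And>c x. x \<in> M \<Longrightarrow> c *\<^sub>R x \<in> M"
    and Nsc: "\<And>c x. x \<in> N \<Longrightarrow> c *\<^sub>R x \<in> N"
    and MN: "\<And>x. \<exists>m\<in>M. \<exists>n\<in>N. x = m + n"
    and disj: "M \<inter> N = {0}"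
  shows "\<exists>K. \<forall>m\<in>M. \<forall>n\<in>N. norm m \<le> K * norm (m + n)"
proof -
  have Mneg: "- x \<in> M" if "x \<in> M" for x using Msc[OF that, of "-1"] by simp
  have Nneg: "- x \<in> N" if "x \<in> N" for x using Nsc[OF that, of "-1"] by simp
  have Mdiff: "x - y \<in> M" if "x \<in> M" "y \<in> M" for x y using Madd[OF that(1) Mneg[OF that(2)]] by simp
  have Ndiff: "x - y \<in> N" if "x \<in> N" "y \<in> N" for x y using Nadd[OF that(1) Nneg[OF that(2)]] by simp
  define S where "S k = {m + n | m n. m \<in> M \<and> n \<in> N \<and> norm m + norm n \<le> real k}" for k :: nat
  have UN: "\<Union>(range (\<lambda>k. closure (S k))) = UNIV"
  proof (rule set_eqI, rule iffI)
    fix x :: 'a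
    obtain m n where mn: "m \<in> M" "n \<in> N" "x = m + n" using MN by blast
    obtain k :: nat where "norm m + norm n \<le> real k" using real_arch_simple by blast
    then have "x \<in> S k" using mn unfolding S_def by blast
    then show "x \<in> \<Union>(range (\<lambda>k. closure (S k)))" using closure_subset by blast
  qed simp
  have "\<exists>k. interior (closure (S k)) \<noteq> {}"
  proof (rule ccontr)
    assume "\<not> ?thesis"
    then have "euclidean interior_of \<Union>(range (\<lambda>k. closure (S k))) = {}"
      by (intro Baire_category_alt) (auto simp: completely_metrizable_space_euclidean closed_closedin[symmetric])
    then show False using UN by simp
  qed
  then obtain k y where "y \<in> interior (closure (S k))" by blast
  then obtain e where e: "e > 0" "ball y e \<subseteq> closure (S k)"
    by (meson open_contains_ball open_interior interior_subset subset_trans)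
  have approx: "\<exists>m\<in>M. \<exists>n\<in>N. norm m + norm n \<le> 2 * real k \<and> norm (z - (m + n)) < d"
    if z: "norm z < e" and d: "d > 0" for z d
  proof -
    have "y + z \<in> closure (S k)" using e z by (auto simp: dist_norm)
    then obtain a where a: "a \<in> S k" "dist a (y + z) < d / 2"
      using closure_approachable d by (metis half_gt_zero)
    have "y \<in> closure (S k)" using e by auto
    then obtain b where b: "b \<in> S k" "dist b y < d / 2"
      using closure_approachable d by (metis half_gt_zero)
    obtain m1 n1 where 1: "a = m1 + n1" "m1 \<in> M" "n1 \<in> N" "norm m1 + norm n1 \<le> real k"
      using a(1) unfolding S_def by blast
    obtain m2 n2 where 2: "b = m2 + n2" "m2 \<in> M" "n2 \<in> N" "norm m2 + norm n2 \<le> real k"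
      using b(1) unfolding S_def by blast
    have "norm (m1 - m2) + norm (n1 - n2) \<le> 2 * real k"
      using 1 2 norm_triangle_ineq4[of m1 m2] norm_triangle_ineq4[of n1 n2] by linarith
    moreover have "norm (z - ((m1 - m2) + (n1 - n2))) < d"
    proof -
      have "z - ((m1 - m2) + (n1 - n2)) = (y + z - a) - (y - b)" using 1 2 by (simp add: algebra_simps)
      then have "norm (z - ((m1 - m2) + (n1 - n2))) \<le> norm (y + z - a) + norm (y - b)"
        using norm_triangle_ineq4 by metis
      moreover have "norm (y + z - a) < d/2" "norm (y - b) < d/2"
        using a b by (simp_all add: dist_norm norm_minus_commute)
      ultimately show ?thesis by linarith
    qed
    ultimately show ?thesis using 1 2 Mdiff Ndiff by blast
  qed
  define c where "c = 4 * real k / e"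
  have c0: "c \<ge> 0" using e by (simp add: c_def)
  have step: "\<exists>m\<in>M. \<exists>n\<in>N. norm m + norm n \<le> c * norm x \<and> norm (x - (m + n)) \<le> norm x / 2" for x
  proof (cases "x = 0")
    case True then show ?thesis using M0 N0 by (intro bexI[of _ 0]) auto
  next
    case False
    then have nx: "norm x > 0" by simp
    define t where "t = e / (2 * norm x)"
    have t: "t > 0" using e nx by (simp add: t_def)
    have "norm (t *\<^sub>R x) < e" using e nx t by (simp add: t_def)
    then obtain m n where mn: "m \<in> M" "n \<in> N" "norm m + norm n \<le> 2 * real k"
      "norm (t *\<^sub>R x - (m + n)) < e / 4"
      using approx[of "t *\<^sub>R x" "e/4"] e by auto
    have "norm ((1/t) *\<^sub>R m) + norm ((1/t) *\<^sub>R n) = (norm m + norm n) / t" using t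
      by (simp add: add_divide_distrib)
    also have "\<dots> \<le> 2 * real k / t" using mn(3) t by (simp add: divide_right_mono)
    also have "\<dots> = c * norm x" using e nx by (simp add: t_def c_def field_simps)
    finally have A: "norm ((1/t) *\<^sub>R m) + norm ((1/t) *\<^sub>R n) \<le> c * norm x" .
    have "x - ((1/t) *\<^sub>R m + (1/t) *\<^sub>R n) = (1/t) *\<^sub>R (t *\<^sub>R x - (m + n))"
      using t by (simp add: algebra_simps)
    then have "norm (x - ((1/t) *\<^sub>R m + (1/t) *\<^sub>R n)) = norm (t *\<^sub>R x - (m + n)) / t"
      using t by simp
    also have "\<dots> \<le> (e / 4) / t" using divide_right_mono[OF less_imp_le[OF mn(4)], of t] t by simp
    also have "\<dots> = norm x / 2" using e nx by (simp add: t_def field_simps)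
    finally show ?thesis using A mn Msc Nsc by blast
  qed
  define h where "h x = (SOME p. fst p \<in> M \<and> snd p \<in> N \<and> norm (fst p) + norm (snd p) \<le> c * norm x
      \<and> norm (x - (fst p + snd p)) \<le> norm x / 2)" for x
  have h: "fst (h x) \<in> M \<and> snd (h x) \<in> N \<and> norm (fst (h x)) + norm (snd (h x)) \<le> c * norm x
      \<and> norm (x - (fst (h x) + snd (h x))) \<le> norm x / 2" for x
  proof -
    obtain m n where "m \<in> M" "n \<in> N" "norm m + norm n \<le> c * norm x" "norm (x - (m + n)) \<le> norm x / 2"
      using step by blast
    then have "\<exists>p. fst p \<in> M \<and> snd p \<in> N \<and> norm (fst p) + norm (snd p) \<le> c * norm x
      \<and> norm (x - (fst p + snd p)) \<le> norm x / 2" by (intro exI[of _ "(m,n)"]) simp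
    then show ?thesis unfolding h_def by (rule someI_ex)
  qed
  have decomp: "\<exists>mm\<in>M. \<exists>nn\<in>N. x0 = mm + nn \<and> norm mm \<le> 2 * c * norm x0" for x0
  proof -
    define r where "r x = x - (fst (h x) + snd (h x))" for x
    define xs where "xs j = (r ^^ j) x0" for j
    define m where "m j = fst (h (xs j))" for j
    define n where "n j = snd (h (xs j))" for j
    have xsS: "xs (Suc j) = xs j - (m j + n j)" for j by (simp add: xs_def r_def m_def n_def)
    have xsb: "norm (xs j) \<le> norm x0 * (1/2)^j" for j
    proof (induction j)
      case 0 then show ?case by (simp add: xs_def)
    next
      case (Suc j)
      have "norm (xs (Suc j)) \<le> norm (xs j) / 2" using h[of "xs j"] xsS[of j] by (simp add: m_def n_def)
      also have "\<dots> \<le> norm x0 * (1/2)^j / 2" using Suc by simp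
      finally show ?case by simp
    qed
    have mb: "norm (m j) \<le> c * norm x0 * (1/2)^j" for j
    proof -
      have "norm (m j) \<le> c * norm (xs j)" using h[of "xs j"] norm_ge_zero[of "snd (h (xs j))"] unfolding m_def by linarith
      also have "\<dots> \<le> c * (norm x0 * (1/2)^j)" using xsb c0 by (simp add: mult_left_mono)
      finally show ?thesis by simp
    qed
    have nb: "norm (n j) \<le> c * norm x0 * (1/2)^j" for j
    proof -
      have "norm (n j) \<le> c * norm (xs j)" using h[of "xs j"] norm_ge_zero[of "fst (h (xs j))"] unfolding n_def by linarith
      also have "\<dots> \<le> c * (norm x0 * (1/2)^j)" using xsb c0 by (simp add: mult_left_mono)
      finally show ?thesis by simp
    qed
    have gs: "summable (\<lambda>j. c * norm x0 * (1/2::real)^j)"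
      by (intro summable_mult summable_geometric) simp
    have smn: "summable (\<lambda>j. norm (m j))"
      by (rule summable_norm_comparison_test[OF _ gs]) (use mb in auto)
    have snn: "summable (\<lambda>j. norm (n j))"
      by (rule summable_norm_comparison_test[OF _ gs]) (use nb in auto)
    have sm: "summable m" by (rule summable_norm_cancel[OF smn])
    have sn: "summable n" by (rule summable_norm_cancel[OF snn])
    have xs0: "xs \<longlonglongrightarrow> 0"
    proof (rule Lim_null_comparison)
      show "\<forall>\<^sub>F j in sequentially. norm (xs j) \<le> norm x0 * (1/2)^j" using xsb by simp
      show "(\<lambda>j. norm x0 * (1/2::real)^j) \<longlonglongrightarrow> 0"
        by (intro tendsto_mult_right_zero LIMSEQ_power_zero) simp
    qed
    have "(\<lambda>j. xs j - xs (Suc j)) sums (xs 0 - 0)" by (rule telescope_sums'[OF xs0])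
    moreover have "(\<lambda>j. xs j - xs (Suc j)) = (\<lambda>j. m j + n j)" by (rule ext) (simp only: xsS diff_diff_eq2 add_diff_cancel_left')
    moreover have "xs 0 = x0" by (simp add: xs_def)
    ultimately have "(\<lambda>j. m j + n j) sums x0" by simp
    moreover have "(\<lambda>j. m j + n j) sums (suminf m + suminf n)"
      using sums_add[OF summable_sums[OF sm] summable_sums[OF sn]] .
    ultimately have x0eq: "x0 = suminf m + suminf n" using sums_unique2 by blast
    have mM: "m j \<in> M" for j using h[of "xs j"] by (simp add: m_def)
    have nN: "n j \<in> N" for j using h[of "xs j"] by (simp add: n_def)
    have psM: "(\<Sum>i<j. m i) \<in> M" for j
      by (induction j) (simp_all add: M0 Madd mM)
    have psN: "(\<Sum>i<j. n i) \<in> N" for j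
      by (induction j) (simp_all add: N0 Nadd nN)
    have inM: "suminf m \<in> M"
      by (rule closed_sequentially[OF cM _ summable_LIMSEQ[OF sm]]) (rule psM)
    have inN: "suminf n \<in> N"
      by (rule closed_sequentially[OF cN _ summable_LIMSEQ[OF sn]]) (rule psN)
    have "norm (suminf m) \<le> (\<Sum>j. norm (m j))" by (rule summable_norm[OF smn])
    also have "\<dots> \<le> (\<Sum>j. c * norm x0 * (1/2::real)^j)"
      by (rule suminf_le[OF mb smn gs])
    also have "\<dots> = c * norm x0 * 2"
      by (simp add: suminf_mult suminf_geometric)
    finally have "norm (suminf m) \<le> 2 * c * norm x0" by simp
    then show ?thesis using x0eq inM inN by blast
  qed
  have "norm mm \<le> 2 * c * norm (mm + nn)" if "mm \<in> M" "nn \<in> N" for mm nn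
  proof -
    obtain m' n' where mn': "m' \<in> M" "n' \<in> N" "mm + nn = m' + n'" "norm m' \<le> 2 * c * norm (mm + nn)"
      using decomp[of "mm + nn"] by blast
    have "mm - m' = n' - nn" using mn'(3) by (simp add: algebra_simps)
    moreover have "mm - m' \<in> M" "n' - nn \<in> N" using that mn' Mdiff Ndiff by auto
    ultimately have "mm - m' \<in> M \<inter> N" by simp
    then have "mm = m'" using disj by simp
    then show ?thesis using mn'(4) by simp
  qed
  then show ?thesis by blast
qed

lemma cs_zero: "csubspace M \<Longrightarrow> 0 \<in> M" by (simp add: csubspace_def)
lemma cs_add: "csubspace M \<Longrightarrow> x \<in> M \<Longrightarrow> y \<in> M \<Longrightarrow> x + y \<in> M" by (simp add: csubspace_def)
lemma cs_scaleC: "csubspace M \<Longrightarrow> x \<in> M \<Longrightarrow> scaleC c x \<in> M" by (simp add: csubspace_def)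
lemma cs_scaleR: "csubspace M \<Longrightarrow> x \<in> M \<Longrightarrow> r *\<^sub>R x \<in> M"
  using cs_scaleC[of M x "complex_of_real r"] by (simp add: scaleC_of_real)
lemma cs_neg: "csubspace M \<Longrightarrow> x \<in> M \<Longrightarrow> - x \<in> M"
  using cs_scaleR[of M x "-1"] by simp
lemma cs_diff: "csubspace M \<Longrightarrow> x \<in> M \<Longrightarrow> y \<in> M \<Longrightarrow> x - y \<in> M"
  using cs_add[of M x "- y"] cs_neg[of M y] by simp

lemma ds_decomp:
  assumes "direct_sum M N" shows "\<exists>m\<in>M. \<exists>n\<in>N. x = m + n"
proof -
  have "x \<in> {x + y | x y. x \<in> M \<and> y \<in> N}" using assms unfolding direct_sum_def by simp
  then show ?thesis by blast
qed
lemma ds_unique: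
  assumes "direct_sum M N" "csubspace M" "csubspace N" "m \<in> M" "n \<in> N" "m' \<in> M" "n' \<in> N" "m + n = m' + n'"
  shows "m = m' \<and> n = n'"
proof -
  have "m - m' = n' - n" using assms(8) by (simp add: algebra_simps)
  moreover have "m - m' \<in> M" "n' - n \<in> N" using assms cs_diff by auto
  ultimately have "m - m' \<in> M \<inter> N" by simp
  moreover have "M \<inter> N = {0}" using assms(1) by (simp add: direct_sum_def)
  ultimately have "m - m' = 0" by blast
  then have "m = m'" by simp
  then show ?thesis using assms(8) by simp
qed

lemma ds_proj_bound:
  fixes M N :: "'a::complex_banach set"
  assumes "closed_csubspace M" "closed_csubspace N" "direct_sum M N"
  shows "\<exists>K\<ge>0. \<forall>m\<in>M. \<forall>n\<in>N. norm m \<le> K * norm (m + n)"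
proof -
  have cs: "csubspace M" "csubspace N" "closed M" "closed N" using assms by (auto simp: closed_csubspace_def)
  have disj: "M \<inter> N = {0}" using assms(3) by (simp add: direct_sum_def)
  have decomp: "\<And>x. \<exists>m\<in>M. \<exists>n\<in>N. x = m + n" by (rule ds_decomp[OF assms(3)])
  obtain K where K: "\<forall>m\<in>M. \<forall>n\<in>N. norm m \<le> K * norm (m + n)"
    using proj_bounded[OF cs(3) cs(4) cs_zero[OF cs(1)] cs_zero[OF cs(2)] cs_add[OF cs(1)] cs_add[OF cs(2)]
       cs_scaleR[OF cs(1)] cs_scaleR[OF cs(2)] decomp disj] by blast
  have "\<forall>m\<in>M. \<forall>n\<in>N. norm m \<le> max K 0 * norm (m + n)"
    using K by (meson max.cobounded1 mult_right_mono norm_ge_zero order_trans)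
  then show ?thesis by (intro exI[of _ "max K 0"]) auto
qed

lemma ds_sym:
  assumes d: "direct_sum M N" shows "direct_sum N M"
proof -
  have 1: "N \<inter> M = {0}" using d unfolding direct_sum_def by blast
  have "z \<in> {x + y |x y. x \<in> N \<and> y \<in> M}" for z
  proof -
    obtain m n where "m \<in> M" "n \<in> N" "z = m + n" using ds_decomp[OF d] by blast
    then have "z = n + m" "n \<in> N" "m \<in> M" by (simp_all add: add.commute)
    then show ?thesis by blast
  qed
  then show ?thesis using 1 unfolding direct_sum_def by blast
qed

locale isoMN =
  fixes M N :: "'a::complex_banach set" and V :: "'a \<Rightarrow> 'a"
  assumes csM: "csubspace M" and csN: "csubspace N" and iso: "iso_on M N V"
begin

lemma bij: "bij_betw V M N" using iso by (simp add: iso_on_def)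
lemma V_in: "x \<in> M \<Longrightarrow> V x \<in> N" using bij bij_betwE by blast
lemma V_add: "x \<in> M \<Longrightarrow> y \<in> M \<Longrightarrow> V (x + y) = V x + V y" using iso by (simp add: iso_on_def)
lemma V_scaleC: "x \<in> M \<Longrightarrow> V (scaleC c x) = scaleC c (V x)" using iso by (simp add: iso_on_def)
lemma V_zero: "V 0 = 0"
  using V_add[of 0 0] cs_zero[OF csM] by simp
lemma V_neg: "x \<in> M \<Longrightarrow> V (- x) = - V x"
proof -
  assume x: "x \<in> M"
  have "V x + V (- x) = 0" using V_add[OF x cs_neg[OF csM x]] V_zero by simp
  then show ?thesis by (metis neg_eq_iff_add_eq_0)
qed
lemma V_scaleR: "x \<in> M \<Longrightarrow> V (r *\<^sub>R x) = r *\<^sub>R V x"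
  using V_scaleC[of x "complex_of_real r"] by (simp add: scaleC_of_real)
definition Vi where "Vi = inv_into M V"
lemma Vi_in: "y \<in> N \<Longrightarrow> Vi y \<in> M" unfolding Vi_def using bij bij_betw_inv_into bij_betwE by blast
lemma V_Vi: "y \<in> N \<Longrightarrow> V (Vi y) = y" unfolding Vi_def using bij bij_betw_inv_into_right by metis
lemma Vi_V: "x \<in> M \<Longrightarrow> Vi (V x) = x" unfolding Vi_def using bij bij_betw_inv_into_left by metis
lemma Vi_add: "x \<in> N \<Longrightarrow> y \<in> N \<Longrightarrow> Vi (x + y) = Vi x + Vi y"
  by (metis V_Vi V_add Vi_V Vi_in cs_add csM)
lemma Vi_scaleC: "x \<in> N \<Longrightarrow> Vi (scaleC c x) = scaleC c (Vi x)"
  by (metis V_Vi V_scaleC Vi_V Vi_in cs_scaleC csM)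
lemma V_bound: "\<exists>K\<ge>0. \<forall>x\<in>M. norm (V x) \<le> K * norm x"
proof -
  obtain K where K: "\<forall>x\<in>M. norm (V x) \<le> K * norm x" using iso by (auto simp: iso_on_def)
  have "\<forall>x\<in>M. norm (V x) \<le> max K 0 * norm x"
    using K by (meson max.cobounded1 mult_right_mono norm_ge_zero order_trans)
  then show ?thesis by (intro exI[of _ "max K 0"]) auto
qed
lemma Vi_bound: "\<exists>K\<ge>0. \<forall>x\<in>N. norm (Vi x) \<le> K * norm x"
proof -
  obtain K where K: "\<forall>x\<in>N. norm (Vi x) \<le> K * norm x" using iso by (auto simp: iso_on_def Vi_def)
  have "\<forall>x\<in>N. norm (Vi x) \<le> max K 0 * norm x"
    using K by (meson max.cobounded1 mult_right_mono norm_ge_zero order_trans)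
  then show ?thesis by (intro exI[of _ "max K 0"]) auto
qed

end

lemma fix_image: "(\<And>z. z \<in> G \<Longrightarrow> W z = z) \<Longrightarrow> W ` G = G"
  by simp

lemma W_facts:
  fixes M N :: "'a::complex_banach set" and V W :: "'a \<Rightarrow> 'a"
  assumes cM: "closed_csubspace M" and cN: "closed_csubspace N" and ds: "direct_sum M N"
    and iso: "iso_on M N V"
    and W: "\<forall>x\<in>M. \<forall>y\<in>N. W (x + y) = inv_into M V y + V x"
  shows "\<forall>x\<in>M. W x = V x" "\<forall>y\<in>N. W y = inv_into M V y"
    "\<forall>x\<in>M. W (x + V x) = x + V x" "\<forall>z. W (W z) = z" "cblin W"
    "W ` M = N" "W ` N = M" "bij W" "inv W = W" "W ` {x + V x | x. x \<in> M} = {x + V x | x. x \<in> M}"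
proof -
  have csM: "csubspace M" and csN: "csubspace N" using cM cN by (auto simp: closed_csubspace_def)
  interpret isoMN M N V using csM csN iso by unfold_locales
  have W': "W (x + y) = Vi y + V x" if "x \<in> M" "y \<in> N" for x y using W that by (simp add: Vi_def)
  have Vi0: "Vi 0 = 0" using Vi_V[OF cs_zero[OF csM]] V_zero by simp
  show 1: "\<forall>x\<in>M. W x = V x" using W'[OF _ cs_zero[OF csN]] Vi0 by simp
  show 2: "\<forall>y\<in>N. W y = inv_into M V y" using W'[OF cs_zero[OF csM]] V_zero
    unfolding Vi_def[symmetric] by simp
  show 3: "\<forall>x\<in>M. W (x + V x) = x + V x" using W' V_in Vi_V by (simp add: add.commute)
  show 4: "\<forall>z. W (W z) = z"
  proof
    fix z
    obtain x y where xy: "x \<in> M" "y \<in> N" "z = x + y" using ds_decomp[OF ds] by blast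
    have "W z = Vi y + V x" using W' xy by simp
    then have "W (W z) = Vi (V x) + V (Vi y)" using W' Vi_in V_in xy by simp
    then show "W (W z) = z" using xy Vi_V V_Vi by simp
  qed
  have Wadd: "W (z1 + z2) = W z1 + W z2" for z1 z2
  proof -
    obtain x1 y1 where 1: "x1 \<in> M" "y1 \<in> N" "z1 = x1 + y1" using ds_decomp[OF ds] by blast
    obtain x2 y2 where 2: "x2 \<in> M" "y2 \<in> N" "z2 = x2 + y2" using ds_decomp[OF ds] by blast
    have "W (z1 + z2) = W ((x1 + x2) + (y1 + y2))" using 1 2 by (simp add: algebra_simps)
    also have "\<dots> = Vi (y1 + y2) + V (x1 + x2)"
      by (rule W'[OF cs_add[OF csM 1(1) 2(1)] cs_add[OF csN 1(2) 2(2)]])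
    also have "\<dots> = W z1 + W z2" using 1 2 W' Vi_add V_add by (simp add: algebra_simps)
    finally show ?thesis .
  qed
  have WscC: "W (scaleC c z) = scaleC c (W z)" for c z
  proof -
    obtain x y where xy: "x \<in> M" "y \<in> N" "z = x + y" using ds_decomp[OF ds] by blast
    have "W (scaleC c z) = W (scaleC c x + scaleC c y)" using xy by (simp add: scaleC_add_right)
    also have "\<dots> = Vi (scaleC c y) + V (scaleC c x)"
      by (rule W'[OF cs_scaleC[OF csM xy(1)] cs_scaleC[OF csN xy(2)]])
    also have "\<dots> = scaleC c (W z)" using xy W' Vi_scaleC V_scaleC by (simp add: scaleC_add_right)
    finally show ?thesis .
  qed
  have WscR: "W (r *\<^sub>R z) = r *\<^sub>R W z" for r z
    using WscC[of "complex_of_real r" z] by (simp add: scaleC_of_real)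
  obtain K1 where K1: "K1 \<ge> 0" "\<forall>m\<in>M. \<forall>n\<in>N. norm m \<le> K1 * norm (m + n)"
    using ds_proj_bound[OF cM cN ds] by blast
  obtain K2 where K2: "K2 \<ge> 0" "\<forall>n\<in>N. \<forall>m\<in>M. norm n \<le> K2 * norm (n + m)"
    using ds_proj_bound[OF cN cM ds_sym[OF ds]] by blast
  obtain KV where KV: "KV \<ge> 0" "\<forall>x\<in>M. norm (V x) \<le> KV * norm x" using V_bound by blast
  obtain KW where KW: "KW \<ge> 0" "\<forall>x\<in>N. norm (Vi x) \<le> KW * norm x" using Vi_bound by blast
  have Wb: "norm (W z) \<le> norm z * (KW * K2 + KV * K1)" for z
  proof -
    obtain x y where xy: "x \<in> M" "y \<in> N" "z = x + y" using ds_decomp[OF ds] by blast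
    have "norm (W z) \<le> norm (Vi y) + norm (V x)" using W' xy norm_triangle_ineq by simp
    also have "\<dots> \<le> KW * norm y + KV * norm x" using KW KV xy by (simp add: add_mono)
    also have "\<dots> \<le> KW * (K2 * norm z) + KV * (K1 * norm z)"
    proof (rule add_mono)
      have "norm y \<le> K2 * norm z" using K2(2) xy by (metis add.commute)
      then show "KW * norm y \<le> KW * (K2 * norm z)" using KW(1) by (simp add: mult_left_mono)
      have "norm x \<le> K1 * norm z" using K1(2) xy by blast
      then show "KV * norm x \<le> KV * (K1 * norm z)" using KV(1) by (simp add: mult_left_mono)
    qed
    finally show ?thesis by (simp add: algebra_simps)
  qed
  show "cblin W" unfolding cblin_def
    using bounded_linear_intro[of W, OF Wadd WscR Wb] WscC by blast
  show "W ` M = N"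
  proof
    show "W ` M \<subseteq> N" using 1 V_in by auto
    show "N \<subseteq> W ` M"
    proof
      fix y assume "y \<in> N"
      then have "y = W (Vi y)" "Vi y \<in> M" using 1 V_Vi Vi_in by auto
      then show "y \<in> W ` M" by blast
    qed
  qed
  show "W ` N = M"
  proof
    show "W ` N \<subseteq> M" using 2 Vi_in by (auto simp: Vi_def)
    show "M \<subseteq> W ` N"
    proof
      fix x assume "x \<in> M"
      then have "x = W (V x)" "V x \<in> N" using 2 Vi_V V_in by (auto simp: Vi_def)
      then show "x \<in> W ` N" by blast
    qed
  qed
  have WW: "W \<circ> W = id" using 4 by (simp add: fun_eq_iff)
  show "bij W" by (rule o_bij[OF WW WW])
  show "inv W = W" by (rule inv_equality) (simp_all add: 4)
  show "W ` {x + V x | x. x \<in> M} = {x + V x | x. x \<in> M}"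
  proof (rule fix_image)
    fix z assume "z \<in> {x + V x | x. x \<in> M}"
    then obtain x where "x \<in> M" "z = x + V x" by blast
    then show "W z = z" using 3 by simp
  qed
qed


lemma cblin_id: "cblin id" unfolding cblin_def by (simp add: bounded_linear_ident[unfolded id_def[symmetric]])
lemma cblin_comp: "cblin f \<Longrightarrow> cblin g \<Longrightarrow> cblin (f \<circ> g)"
  unfolding cblin_def using bounded_linear_compose[of f g] by (simp add: comp_def)

lemma fix_sets:
  assumes "bij A" "A ` M \<subseteq> M" "inv A ` M \<subseteq> M"
  shows "A ` M = M" "inv A ` M = M"
proof -
  have "M = A ` (inv A ` M)" using assms(1) by (simp add: bij_is_surj image_f_inv_f)
  also have "\<dots> \<subseteq> A ` M" using assms(3) by blast
  finally show "A ` M = M" using assms(2) by blast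
  then show "inv A ` M = M" using assms(1) by (metis bij_is_inj image_inv_f_f)
qed

lemma semidirect_intro:
  fixes F :: "'a::complex_normed_vector set set" and Og :: "('a \<Rightarrow> 'a) set"
  assumes Fcl: "\<forall>M\<in>F. closed_csubspace M"
    and Ogc: "\<forall>T\<in>Og. cblin T \<and> bij T \<and> inv T \<in> Og"
    and Ogp: "\<forall>T\<in>Og. \<forall>M\<in>F. T ` M \<in> F"
    and Ogid: "id \<in> Og" and Ogcomp: "\<forall>S\<in>Og. \<forall>T\<in>Og. S \<circ> T \<in> Og"
    and match: "\<forall>S\<in>Col F. \<exists>T\<in>Og. \<forall>M\<in>F. S ` M = T ` M"
    and faith: "\<forall>T\<in>Og. (\<forall>M\<in>F. T ` M = M) \<longrightarrow> T = id"
  shows "semidirect_Col F Og"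
proof -
  have Tinv: "T ` (inv T ` M) = M" "inv T ` (T ` M) = M" if "T \<in> Og" for T M
    using Ogc that by (auto simp: bij_is_surj bij_is_inj image_f_inv_f image_inv_f_f)
  have OgCol: "Og \<subseteq> Col F"
  proof
    fix T assume T: "T \<in> Og"
    have "cblin (inv T)" using Ogc T by blast
    moreover have "M \<in> F \<longleftrightarrow> T ` M \<in> F" for M
    proof
      assume "M \<in> F" then show "T ` M \<in> F" using Ogp T by blast
    next
      assume "T ` M \<in> F"
      moreover have "inv T \<in> Og" using Ogc T by blast
      ultimately have "inv T ` (T ` M) \<in> F" using Ogp by blast
      then show "M \<in> F" using Tinv(2)[OF T, of M] by simp
    qed
    ultimately show "T \<in> Col F" using Ogc T unfolding Col_def by blast
  qed
  have GrpA: "A \<in> Grp (Alg F) \<Longrightarrow> M \<in> F \<Longrightarrow> A ` M = M \<and> inv A ` M = M" for A M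
    using fix_sets[of A M] unfolding Grp_def Alg_def by blast
  have sub1: "Col F \<subseteq> {A \<circ> T | A T. A \<in> Grp (Alg F) \<and> T \<in> Og}"
  proof
    fix S assume S: "S \<in> Col F"
    then obtain T where T: "T \<in> Og" "\<forall>M\<in>F. S ` M = T ` M" using match by blast
    have Sp: "cblin S" "bij S" "cblin (inv S)" using S unfolding Col_def by auto
    have Tp: "cblin T" "bij T" "inv T \<in> Og" "cblin (inv T)" using Ogc T(1) by auto
    define A where "A = S \<circ> inv T"
    have SA: "S = A \<circ> T" unfolding A_def using Tp(2)
      by (simp add: o_assoc[symmetric] bij_is_inj inv_o_cancel)
    have bA: "bij A" unfolding A_def using Sp(2) Tp(2) by (simp add: bij_comp bij_imp_bij_inv)
    have iA: "inv A = T \<circ> inv S" unfolding A_def using Sp(2) Tp(2)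
      by (simp add: o_inv_distrib bij_imp_bij_inv inv_inv_eq)
    have AM: "A ` M = M" if "M \<in> F" for M
    proof -
      have "inv T ` M \<in> F" using Ogp Tp(3) that by blast
      then have "S ` (inv T ` M) = T ` (inv T ` M)" using T(2) by blast
      then have "S ` (inv T ` M) = M" using Tinv(1)[OF T(1)] by simp
      then show ?thesis unfolding A_def by (simp add: image_comp)
    qed
    have iAM: "inv A ` M = M" if "M \<in> F" for M
      using AM[OF that] bA by (metis bij_is_inj image_inv_f_f)
    have "A \<in> Grp (Alg F)"
      unfolding Grp_def Alg_def using bA iA AM iAM Sp Tp
      by (auto simp: A_def cblin_comp)
    then show "S \<in> {A \<circ> T | A T. A \<in> Grp (Alg F) \<and> T \<in> Og}" using SA T(1) by blast
  qed
  have sub2: "{A \<circ> T | A T. A \<in> Grp (Alg F) \<and> T \<in> Og} \<subseteq> Col F"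
  proof
    fix S assume "S \<in> {A \<circ> T | A T. A \<in> Grp (Alg F) \<and> T \<in> Og}"
    then obtain A T where AT: "S = A \<circ> T" "A \<in> Grp (Alg F)" "T \<in> Og" by blast
    have Ap: "cblin A" "bij A" "cblin (inv A)" using AT(2) unfolding Grp_def Alg_def by auto
    have Tp: "cblin T" "bij T" "inv T \<in> Og" "cblin (inv T)" using Ogc AT(3) by auto
    have "cblin S" using AT Ap Tp cblin_comp by simp
    moreover have "bij S" using AT Ap Tp by (simp add: bij_comp)
    moreover have "cblin (inv S)" using AT Ap Tp by (simp add: o_inv_distrib cblin_comp)
    moreover have "M \<in> F \<longleftrightarrow> S ` M \<in> F" for M
    proof
      assume "M \<in> F"
      then have "T ` M \<in> F" using Ogp AT(3) by blast
      moreover have "A ` (T ` M) = T ` M" using GrpA[OF AT(2) \<open>T ` M \<in> F\<close>] by blast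
      moreover have "S ` M = A ` (T ` M)" by (simp add: AT(1) image_comp)
      ultimately show "S ` M \<in> F" by simp
    next
      assume SM: "S ` M \<in> F"
      have "S ` M = A ` (T ` M)" by (simp add: AT(1) image_comp)
      then have "inv A ` (S ` M) = T ` M"
        using Ap(2) by (simp add: bij_is_inj image_inv_f_f)
      moreover have "inv A ` (S ` M) = S ` M" using GrpA[OF AT(2) SM] by blast
      ultimately have "T ` M \<in> F" using SM by simp
      then have "inv T ` (T ` M) \<in> F" using Ogp Tp(3) by blast
      then show "M \<in> F" using Tinv(2)[OF AT(3)] by simp
    qed
    ultimately show "S \<in> Col F" unfolding Col_def by blast
  qed
  have idG: "id \<in> Grp (Alg F)" unfolding Grp_def Alg_def by (simp add: cblin_id)
  have GI: "Grp (Alg F) \<inter> Og = {id}"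
  proof
    show "{id} \<subseteq> Grp (Alg F) \<inter> Og" using idG Ogid by blast
    show "Grp (Alg F) \<inter> Og \<subseteq> {id}"
    proof
      fix T assume T: "T \<in> Grp (Alg F) \<inter> Og"
      then have "\<forall>M\<in>F. T ` M = M" using GrpA by blast
      then have "T = id" using faith T by blast
      then show "T \<in> {id}" by simp
    qed
  qed
  have "\<forall>S\<in>Og. inv S \<in> Og" using Ogc by blast
  moreover have "Col F = {A \<circ> T | A T. A \<in> Grp (Alg F) \<and> T \<in> Og}" using sub1 sub2 by (rule antisym)
  ultimately show ?thesis unfolding semidirect_Col_def
    using OgCol Ogid Ogcomp GI by simp
qed


lemma closed_csubspace_zero: "closed_csubspace ({0} :: 'a::complex_normed_vector set)"
proof -
  have "scaleC c (0::'a) = 0" for c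
  proof -
    have "scaleC c (0::'a) = scaleC c (0 + 0)" by simp
    also have "\<dots> = scaleC c 0 + scaleC c 0" by (rule scaleC_add_right)
    finally show ?thesis by simp
  qed
  then show ?thesis unfolding closed_csubspace_def csubspace_def by simp
qed

lemma closed_csubspace_UNIV: "closed_csubspace (UNIV :: 'a::complex_normed_vector set)"
  unfolding closed_csubspace_def csubspace_def by simp

lemma triv_semidirect:
  fixes F :: "'a::complex_normed_vector set set"
  assumes allid: "\<And>f::'a \<Rightarrow> 'a. f = id" and Fcl: "\<forall>M\<in>F. closed_csubspace M"
  shows "semidirect_Col F {id}"
proof (rule semidirect_intro[OF Fcl])
  show "\<forall>T\<in>{id}. cblin T \<and> bij T \<and> inv T \<in> {id}" using allid[of "inv id"] by (simp add: cblin_id)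
  show "\<forall>T\<in>{id}. \<forall>M\<in>F. T ` M \<in> F" by simp
  show "id \<in> {id}" by simp
  show "\<forall>S\<in>{id}. \<forall>T\<in>{id}. S \<circ> T \<in> {id}" by simp
  show "\<forall>S\<in>Col F. \<exists>T\<in>{id}. \<forall>M\<in>F. S ` M = T ` M"
  proof
    fix S :: "'a \<Rightarrow> 'a" show "\<exists>T\<in>{id}. \<forall>M\<in>F. S ` M = T ` M" using allid[of S] by simp
  qed
  show "\<forall>T\<in>{id}. (\<forall>M\<in>F. T ` M = M) \<longrightarrow> T = id" by simp
qed

lemma ds_zero_UNIV:
  assumes "direct_sum A B" "A = {0}" shows "B = UNIV"
proof -
  have "x \<in> B" for x
  proof -
    obtain m n where "m \<in> A" "n \<in> B" "x = m + n" using ds_decomp[OF assms(1)] by blast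
    then show ?thesis using assms(2) by simp
  qed
  then show ?thesis by blast
qed

lemma ds_int: "direct_sum A B \<Longrightarrow> A \<inter> B = {0}" by (simp add: direct_sum_def)

lemma ne_zero:
  fixes A B C :: "'a::complex_normed_vector set"
  assumes x0: "(x0::'a) \<noteq> 0" and "direct_sum A B" "direct_sum A C" "direct_sum B C"
  shows "A \<noteq> {0}"
proof
  assume "A = {0}"
  then have "B = UNIV" "C = UNIV" using ds_zero_UNIV assms by blast+
  then have "x0 \<in> B \<inter> C" by simp
  then show False using ds_int[OF assms(4)] x0 by simp
qed

lemma perm2:
  assumes "a1 \<in> {z, x1, x2, u}" "a2 \<in> {z, x1, x2, u}" "a1 \<noteq> z" "a1 \<noteq> u" "a2 \<noteq> z" "a2 \<noteq> u" "a1 \<noteq> a2"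
  shows "(a1 = x1 \<and> a2 = x2) \<or> (a1 = x2 \<and> a2 = x1)"
  using assms by auto

lemma perm3:
  assumes "a1 \<in> {z, x1, x2, x3, u}" "a2 \<in> {z, x1, x2, x3, u}" "a3 \<in> {z, x1, x2, x3, u}"
    "a1 \<noteq> z" "a1 \<noteq> u" "a2 \<noteq> z" "a2 \<noteq> u" "a3 \<noteq> z" "a3 \<noteq> u"
    "a1 \<noteq> a2" "a1 \<noteq> a3" "a2 \<noteq> a3"
  shows "(a1 = x1 \<and> a2 = x2 \<and> a3 = x3) \<or> (a1 = x1 \<and> a2 = x3 \<and> a3 = x2)
        \<or> (a1 = x3 \<and> a2 = x2 \<and> a3 = x1) \<or> (a1 = x2 \<and> a2 = x1 \<and> a3 = x3)
        \<or> (a1 = x2 \<and> a2 = x3 \<and> a3 = x1) \<or> (a1 = x3 \<and> a2 = x1 \<and> a3 = x2)"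
  using assms by auto

theorem theorem5p4:
  fixes M1 M2 M3 :: "'a::complex_banach set"
    and V1 V2 V3 W1 W2 W3 :: "'a \<Rightarrow> 'a"
  assumes "closed_csubspace M1" "closed_csubspace M2" "closed_csubspace M3"
    and "direct_sum M1 M2" "direct_sum M2 M1"
    and "direct_sum M1 M3" "direct_sum M3 M1"
    and "direct_sum M2 M3" "direct_sum M3 M2"
    and "iso_on M2 M3 V1" "iso_on M1 M3 V2" "iso_on M1 M2 V3"
    and "M1 = {x + V1 x | x. x \<in> M2}"
    and "M2 = {x + V2 x | x. x \<in> M1}"
    and "M3 = {x + V3 x | x. x \<in> M1}"
    and "\<forall>x2\<in>M2. \<forall>x3\<in>M3. W1 (x2 + x3) = inv_into M2 V1 x3 + V1 x2"
    and "\<forall>x1\<in>M1. \<forall>x3\<in>M3. W2 (x1 + x3) = inv_into M1 V2 x3 + V2 x1"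
    and "\<forall>x1\<in>M1. \<forall>x2\<in>M2. W3 (x1 + x2) = inv_into M1 V3 x2 + V3 x1"
  shows "semidirect_Col {{0}, M1, M2, UNIV} {id, W3}
       \<and> semidirect_Col {{0}, M1, M2, M3, UNIV} {id, W1, W2, W3, W1 \<circ> W2, W2 \<circ> W1}"
proof (cases "\<exists>x0::'a. x0 \<noteq> 0")
  case False
  then have allz: "\<And>x::'a. x = 0" by blast
  have allid: "f = id" for f :: "'a \<Rightarrow> 'a"
  proof
    fix x show "f x = id x" using allz[of "f x"] allz[of x] by simp
  qed
  have Fcl: "\<forall>M\<in>{{0}, M1, M2, UNIV}. closed_csubspace M" "\<forall>M\<in>{{0}, M1, M2, M3, UNIV}. closed_csubspace M"
    using assms(1-3) closed_csubspace_zero closed_csubspace_UNIV by auto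
  have "W1 = id" "W2 = id" "W3 = id" using allid by auto
  then show ?thesis using triv_semidirect[OF allid Fcl(1)] triv_semidirect[OF allid Fcl(2)] by simp
next
  case True
  then obtain x0 :: 'a where x0: "x0 \<noteq> 0" by blast
  have cs1: "csubspace M1" and cs2: "csubspace M2" and cs3: "csubspace M3"
    using assms(1-3) by (auto simp: closed_csubspace_def)
  interpret i1: isoMN M2 M3 V1 using cs2 cs3 assms(10) by unfold_locales
  interpret i2: isoMN M1 M3 V2 using cs1 cs3 assms(11) by unfold_locales
  interpret i3: isoMN M1 M2 V3 using cs1 cs2 assms(12) by unfold_locales
  note W1f = W_facts[OF assms(2) assms(3) assms(8) assms(10) assms(16)]
  note W2f = W_facts[OF assms(1) assms(3) assms(6) assms(11) assms(17)]
  note W3f = W_facts[OF assms(1) assms(2) assms(4) assms(12) assms(18)]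
  have lin1: "linear W1" using W1f(5) by (simp add: cblin_def bounded_linear.linear)
  have lin2: "linear W2" using W2f(5) by (simp add: cblin_def bounded_linear.linear)
  have lin3: "linear W3" using W3f(5) by (simp add: cblin_def bounded_linear.linear)
  note L = linear_add[OF lin1] linear_add[OF lin2] linear_add[OF lin3]
    linear_diff[OF lin1] linear_diff[OF lin2] linear_diff[OF lin3]
    linear_neg[OF lin1] linear_neg[OF lin2] linear_neg[OF lin3]
  have d12: "M1 \<inter> M2 = {0}" and d13: "M1 \<inter> M3 = {0}" and d23: "M2 \<inter> M3 = {0}"
    using assms(4,6,8) by (simp_all add: direct_sum_def)
  have F1: "V2 a = - (a + V3 a)" if a: "a \<in> M1" for a
  proof -
    have "a + V2 a \<in> M2" using a assms(14) by blast
    moreover have "V2 a \<in> M3" using i2.V_in a .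
    then obtain z where z: "z \<in> M1" "V2 a = z + V3 z" using assms(15) by blast
    ultimately have "a + z + V3 z \<in> M2" by (simp add: add.assoc)
    then have "(a + z + V3 z) - V3 z \<in> M2" using cs_diff[OF cs2] i3.V_in[OF z(1)] by blast
    then have "a + z \<in> M2" by simp
    moreover have "a + z \<in> M1" using cs_add[OF cs1 a z(1)] .
    ultimately have "a + z = 0" using d12 by blast
    then have "z = - a" by (simp add: add_eq_0_iff)
    then show ?thesis using z(2) i3.V_neg[OF a] by simp
  qed
  have F2: "V1 (V3 a) = - (a + V3 a)" if a: "a \<in> M1" for a
  proof -
    have Va: "V3 a \<in> M2" using i3.V_in[OF a] .
    then have "V3 a + V1 (V3 a) \<in> M1" using assms(13) by blast
    moreover have "V1 (V3 a) \<in> M3" using i1.V_in Va .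
    then obtain z where z: "z \<in> M1" "V1 (V3 a) = z + V3 z" using assms(15) by blast
    ultimately have "V3 a + z + V3 z \<in> M1" by (simp add: add.assoc)
    then have "(V3 a + z + V3 z) - z \<in> M1" using cs_diff[OF cs1] z(1) by blast
    then have "V3 a + V3 z \<in> M1" by (simp add: algebra_simps)
    moreover have "V3 a + V3 z \<in> M2" using cs_add[OF cs2 Va i3.V_in[OF z(1)]] .
    ultimately have "V3 a + V3 z = 0" using d12 by blast
    then have "V3 (a + z) = 0" using i3.V_add[OF a z(1)] by simp
    then have "a + z = i3.Vi 0" using i3.Vi_V[OF cs_add[OF cs1 a z(1)]] by simp
    also have "i3.Vi 0 = 0" using i3.Vi_V[OF cs_zero[OF cs1]] i3.V_zero by simp
    finally have "z = - a" by (simp add: add_eq_0_iff)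
    then show ?thesis using z(2) i3.V_neg[OF a] by simp
  qed
  have v1a: "W1 a = a" if a: "a \<in> M1" for a
  proof -
    obtain x where "x \<in> M2" "a = x + V1 x" using a assms(13) by blast
    then show ?thesis using W1f(3) by simp
  qed
  have v1b: "W1 (V3 a) = - (a + V3 a)" if "a \<in> M1" for a
    using W1f(1) i3.V_in[OF that] F2[OF that] by simp
  have v2a: "W2 a = - (a + V3 a)" if "a \<in> M1" for a
    using W2f(1) that F1[OF that] by simp
  have v2b: "W2 (V3 a) = V3 a" if a: "a \<in> M1" for a
  proof -
    obtain x where "x \<in> M1" "V3 a = x + V2 x" using i3.V_in[OF a] assms(14) by blast
    then show ?thesis using W2f(3) by simp
  qed
  have v3a: "W3 a = V3 a" if "a \<in> M1" for a using W3f(1) that by simp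
  have v3b: "W3 (V3 a) = a" if "a \<in> M1" for a
    using W3f(2) i3.V_in[OF that] i3.Vi_V[OF that] by (simp add: i3.Vi_def)
  have dec: "\<exists>a\<in>M1. \<exists>a'\<in>M1. x = a + V3 a'" for x
  proof -
    obtain a b where "a \<in> M1" "b \<in> M2" "x = a + b" using ds_decomp[OF assms(4)] by blast
    then show ?thesis using i3.V_Vi i3.Vi_in by metis
  qed
  have r8: "W1 (W2 (W1 x)) = W3 x" for x
  proof -
    obtain a a' where "a \<in> M1" "a' \<in> M1" "x = a + V3 a'" using dec by blast
    then show ?thesis by (simp add: L v1a v1b v2a v2b v3a v3b)
  qed
  have r9: "W2 (W1 (W2 x)) = W3 x" for x
  proof -
    obtain a a' where "a \<in> M1" "a' \<in> M1" "x = a + V3 a'" using dec by blast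
    then show ?thesis by (simp add: L v1a v1b v2a v2b v3a v3b)
  qed
  have r1: "W1 (W1 x) = x" and r2: "W2 (W2 x) = x" and r3: "W3 (W3 x) = x" for x
    using W1f(4) W2f(4) W3f(4) by auto
  have r4: "W1 (W3 x) = W2 (W1 x)" for x using r8[of x, symmetric] r1 by simp
  have r5: "W3 (W1 x) = W1 (W2 x)" for x using r8[of "W1 x", symmetric] r1 by simp
  have r6: "W2 (W3 x) = W1 (W2 x)" for x using r9[of x, symmetric] r2 by simp
  have r7: "W3 (W2 x) = W2 (W1 x)" for x using r9[of "W2 x", symmetric] r2 by simp
  note R = r1 r2 r3 r4 r5 r6 r7 r8 r9
    have p0: "(W1) \<circ> (W1) = id" by (rule ext) (simp add: R)
    have p2: "(W1) \<circ> (W3) = W2 \<circ> W1" by (rule ext) (simp add: R)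
    have p3: "(W1) \<circ> (W1 \<circ> W2) = W2" by (rule ext) (simp add: R)
    have p4: "(W1) \<circ> (W2 \<circ> W1) = W3" by (rule ext) (simp add: R)
    have p6: "(W2) \<circ> (W2) = id" by (rule ext) (simp add: R)
    have p7: "(W2) \<circ> (W3) = W1 \<circ> W2" by (rule ext) (simp add: R)
    have p8: "(W2) \<circ> (W1 \<circ> W2) = W3" by (rule ext) (simp add: R)
    have p9: "(W2) \<circ> (W2 \<circ> W1) = W1" by (rule ext) (simp add: R)
    have p10: "(W3) \<circ> (W1) = W1 \<circ> W2" by (rule ext) (simp add: R)
    have p11: "(W3) \<circ> (W2) = W2 \<circ> W1" by (rule ext) (simp add: R)
    have p12: "(W3) \<circ> (W3) = id" by (rule ext) (simp add: R)
    have p13: "(W3) \<circ> (W1 \<circ> W2) = W1" by (rule ext) (simp add: R)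
    have p14: "(W3) \<circ> (W2 \<circ> W1) = W2" by (rule ext) (simp add: R)
    have p15: "(W1 \<circ> W2) \<circ> (W1) = W3" by (rule ext) (simp add: R)
    have p16: "(W1 \<circ> W2) \<circ> (W2) = W1" by (rule ext) (simp add: R)
    have p17: "(W1 \<circ> W2) \<circ> (W3) = W2" by (rule ext) (simp add: R)
    have p18: "(W1 \<circ> W2) \<circ> (W1 \<circ> W2) = W2 \<circ> W1" by (rule ext) (simp add: R)
    have p19: "(W1 \<circ> W2) \<circ> (W2 \<circ> W1) = id" by (rule ext) (simp add: R)
    have p20: "(W2 \<circ> W1) \<circ> (W1) = W2" by (rule ext) (simp add: R)
    have p21: "(W2 \<circ> W1) \<circ> (W2) = W3" by (rule ext) (simp add: R)
    have p22: "(W2 \<circ> W1) \<circ> (W3) = W1" by (rule ext) (simp add: R)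
    have p23: "(W2 \<circ> W1) \<circ> (W1 \<circ> W2) = id" by (rule ext) (simp add: R)
    have p24: "(W2 \<circ> W1) \<circ> (W2 \<circ> W1) = W1 \<circ> W2" by (rule ext) (simp add: R)
  have n1: "M1 \<noteq> {0}" using ne_zero[OF x0 assms(4) assms(6) assms(8)] .
  have n2: "M2 \<noteq> {0}" using ne_zero[OF x0 assms(5) assms(8) assms(6)] .
  have n3: "M3 \<noteq> {0}" using ne_zero[OF x0 assms(7) assms(9) assms(4)] .
  have u1: "M1 \<noteq> UNIV" using d12 n2 by auto
  have u2: "M2 \<noteq> UNIV" using d12 n1 by auto
  have u3: "M3 \<noteq> UNIV" using d13 n1 by auto
  have e12: "M1 \<noteq> M2" using d12 n1 by auto
  have e13: "M1 \<noteq> M3" using d13 n1 by auto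
  have e23: "M2 \<noteq> M3" using d23 n2 by auto
  have zU: "{0} \<noteq> (UNIV :: 'a set)" using x0 by auto
  have im0: "T ` {0} = {0}" if "linear T" for T :: "'a \<Rightarrow> 'a" using linear_0[OF that] by simp
  have imU: "T ` UNIV = UNIV" if "bij T" for T :: "'a \<Rightarrow> 'a" using that by (simp add: bij_is_surj)
  have W1M1: "W1 ` M1 = M1" using W1f(10) by (simp add: assms(13)[symmetric])
  have W2M2: "W2 ` M2 = M2" using W2f(10) by (simp add: assms(14)[symmetric])
  have W3M3: "W3 ` M3 = M3" using W3f(10) by (simp add: assms(15)[symmetric])
  note IM = W1M1 W2M2 W3M3 W1f(6,7) W2f(6,7) W3f(6,7) im0[OF lin1] im0[OF lin2] im0[OF lin3]
    imU[OF W1f(8)] imU[OF W2f(8)] imU[OF W3f(8)] linear_0[OF lin1] linear_0[OF lin2] linear_0[OF lin3]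
  have IMc: "(W1 \<circ> W2) ` X = W1 ` (W2 ` X)" "(W2 \<circ> W1) ` X = W2 ` (W1 ` X)"
    "(\<lambda>x. W1 (W2 x)) ` X = W1 ` (W2 ` X)" "(\<lambda>x. W2 (W1 x)) ` X = W2 ` (W1 ` X)" for X
    by (simp_all add: image_comp image_image)
  have Fcl: "\<forall>M\<in>{{0}, M1, M2, UNIV}. closed_csubspace M" "\<forall>M\<in>{{0}, M1, M2, M3, UNIV}. closed_csubspace M"
    using assms(1-3) closed_csubspace_zero closed_csubspace_UNIV by auto
  have colS: "cblin S" "bij S" "\<And>M. closed_csubspace M \<Longrightarrow> (M \<in> F \<longleftrightarrow> S ` M \<in> F)"
    if "S \<in> Col F" for S F using that unfolding Col_def by auto
  have S0: "S ` {0} = {0}" "S ` UNIV = UNIV" "S 0 = 0" if "cblin S" "bij S" for S :: "'a \<Rightarrow> 'a"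
  proof -
    have "linear S" using that(1) by (simp add: cblin_def bounded_linear.linear)
    then show "S ` {0} = {0}" "S ` UNIV = UNIV" "S 0 = 0" using im0 imU[OF that(2)] linear_0 by blast+
  qed
  have Sinj: "S ` A = S ` B \<longleftrightarrow> A = B" if "bij S" for S and A B :: "'a set"
    using that by (simp add: bij_is_inj inj_image_eq_iff)
  have D: "semidirect_Col {{0}, M1, M2, UNIV} {id, W3}"
  proof (rule semidirect_intro[OF Fcl(1)])
    show "\<forall>T\<in>{id, W3}. cblin T \<and> bij T \<and> inv T \<in> {id, W3}"
      by (simp add: W3f(5,8,9) cblin_id)
    show "\<forall>T\<in>{id, W3}. \<forall>M\<in>{{0}, M1, M2, UNIV}. T ` M \<in> {{0}, M1, M2, UNIV}"
      by (simp add: IM)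
    show "id \<in> {id, W3}" by simp
    show "\<forall>S\<in>{id, W3}. \<forall>T\<in>{id, W3}. S \<circ> T \<in> {id, W3}" using p12 by auto
    show "\<forall>S\<in>Col {{0}, M1, M2, UNIV}. \<exists>T\<in>{id, W3}. \<forall>M\<in>{{0}, M1, M2, UNIV}. S ` M = T ` M"
    proof
      fix S assume S: "S \<in> Col {{0}, M1, M2, UNIV}"
      note Sp = colS[OF S]
      have s1: "S ` M1 \<in> {{0}, M1, M2, UNIV}" using Sp(3)[OF assms(1)] by simp
      have s2: "S ` M2 \<in> {{0}, M1, M2, UNIV}" using Sp(3)[OF assms(2)] by simp
      note S0' = S0[OF Sp(1,2)]
      have "S ` M1 \<noteq> S ` {0}" "S ` M1 \<noteq> S ` UNIV" "S ` M2 \<noteq> S ` {0}" "S ` M2 \<noteq> S ` UNIV" "S ` M1 \<noteq> S ` M2"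
        by (simp_all only: Sinj[OF Sp(2)]) (simp_all add: n1 n2 u1 u2 e12)
      then have d: "S ` M1 \<noteq> {0}" "S ` M1 \<noteq> UNIV" "S ` M2 \<noteq> {0}" "S ` M2 \<noteq> UNIV" "S ` M1 \<noteq> S ` M2"
        unfolding S0' by simp_all
      have "(S ` M1 = M1 \<and> S ` M2 = M2) \<or> (S ` M1 = M2 \<and> S ` M2 = M1)"
        by (rule perm2[OF s1 s2 d])
      then show "\<exists>T\<in>{id, W3}. \<forall>M\<in>{{0}, M1, M2, UNIV}. S ` M = T ` M"
        by (elim disjE conjE) (simp_all add: S0' IM)
    qed
    show "\<forall>T\<in>{id, W3}. (\<forall>M\<in>{{0}, M1, M2, UNIV}. T ` M = M) \<longrightarrow> T = id"
      by (simp add: IM e12 e12[symmetric])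
  qed
  have T: "semidirect_Col {{0}, M1, M2, M3, UNIV} {id, W1, W2, W3, W1 \<circ> W2, W2 \<circ> W1}"
  proof (rule semidirect_intro[OF Fcl(2)])
    have iv12: "inv (W1 \<circ> W2) = W2 \<circ> W1" using W1f(8,9) W2f(8,9) by (simp add: o_inv_distrib)
    have iv21: "inv (W2 \<circ> W1) = W1 \<circ> W2" using W1f(8,9) W2f(8,9) by (simp add: o_inv_distrib)
    show "\<forall>T\<in>{id, W1, W2, W3, W1 \<circ> W2, W2 \<circ> W1}. cblin T \<and> bij T \<and> inv T \<in> {id, W1, W2, W3, W1 \<circ> W2, W2 \<circ> W1}"
      by (simp add: W1f(5,8,9) W2f(5,8,9) W3f(5,8,9) iv12 iv21 cblin_id cblin_comp bij_comp)
    show "\<forall>T\<in>{id, W1, W2, W3, W1 \<circ> W2, W2 \<circ> W1}. \<forall>M\<in>{{0}, M1, M2, M3, UNIV}. T ` M \<in> {{0}, M1, M2, M3, UNIV}"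
      by (simp add: IM IMc del: image_image)
    show "id \<in> {id, W1, W2, W3, W1 \<circ> W2, W2 \<circ> W1}" by simp
    show "\<forall>S\<in>{id, W1, W2, W3, W1 \<circ> W2, W2 \<circ> W1}. \<forall>T\<in>{id, W1, W2, W3, W1 \<circ> W2, W2 \<circ> W1}. S \<circ> T \<in> {id, W1, W2, W3, W1 \<circ> W2, W2 \<circ> W1}"
      by (simp only: ball_simps insert_iff empty_iff id_comp comp_id simp_thms p0 p2 p3 p4 p6 p7 p8 p9 p10 p11 p12 p13 p14 p15 p16 p17 p18 p19 p20 p21 p22 p23 p24)
    show "\<forall>S\<in>Col {{0}, M1, M2, M3, UNIV}. \<exists>T\<in>{id, W1, W2, W3, W1 \<circ> W2, W2 \<circ> W1}. \<forall>M\<in>{{0}, M1, M2, M3, UNIV}. S ` M = T ` M"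
    proof
      fix S assume S: "S \<in> Col {{0}, M1, M2, M3, UNIV}"
      note Sp = colS[OF S]
      have s1: "S ` M1 \<in> {{0}, M1, M2, M3, UNIV}" using Sp(3)[OF assms(1)] by simp
      have s2: "S ` M2 \<in> {{0}, M1, M2, M3, UNIV}" using Sp(3)[OF assms(2)] by simp
      have s3: "S ` M3 \<in> {{0}, M1, M2, M3, UNIV}" using Sp(3)[OF assms(3)] by simp
      note S0' = S0[OF Sp(1,2)]
      have "S ` M1 \<noteq> S ` {0}" "S ` M1 \<noteq> S ` UNIV" "S ` M2 \<noteq> S ` {0}" "S ` M2 \<noteq> S ` UNIV"
        "S ` M3 \<noteq> S ` {0}" "S ` M3 \<noteq> S ` UNIV"
        "S ` M1 \<noteq> S ` M2" "S ` M1 \<noteq> S ` M3" "S ` M2 \<noteq> S ` M3"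
        by (simp_all only: Sinj[OF Sp(2)]) (simp_all add: n1 n2 n3 u1 u2 u3 e12 e13 e23)
      then have "S ` M1 \<noteq> {0}" "S ` M1 \<noteq> UNIV" "S ` M2 \<noteq> {0}" "S ` M2 \<noteq> UNIV"
        "S ` M3 \<noteq> {0}" "S ` M3 \<noteq> UNIV"
        "S ` M1 \<noteq> S ` M2" "S ` M1 \<noteq> S ` M3" "S ` M2 \<noteq> S ` M3"
        unfolding S0' by simp_all
      note d = this
      have "(S ` M1 = M1 \<and> S ` M2 = M2 \<and> S ` M3 = M3) \<or> (S ` M1 = M1 \<and> S ` M2 = M3 \<and> S ` M3 = M2)
        \<or> (S ` M1 = M3 \<and> S ` M2 = M2 \<and> S ` M3 = M1) \<or> (S ` M1 = M2 \<and> S ` M2 = M1 \<and> S ` M3 = M3)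
        \<or> (S ` M1 = M2 \<and> S ` M2 = M3 \<and> S ` M3 = M1) \<or> (S ` M1 = M3 \<and> S ` M2 = M1 \<and> S ` M3 = M2)"
        by (rule perm3[OF s1 s2 s3 d])
      then show "\<exists>T\<in>{id, W1, W2, W3, W1 \<circ> W2, W2 \<circ> W1}. \<forall>M\<in>{{0}, M1, M2, M3, UNIV}. S ` M = T ` M"
        by (elim disjE conjE) (simp_all add: S0' IM IMc del: image_image)
    qed
    show "\<forall>T\<in>{id, W1, W2, W3, W1 \<circ> W2, W2 \<circ> W1}. (\<forall>M\<in>{{0}, M1, M2, M3, UNIV}. T ` M = M) \<longrightarrow> T = id"
      by (simp add: IM IMc e12 e13 e23 e12[symmetric] e13[symmetric] e23[symmetric] del: image_image)
  qed
  show ?thesis using D T by blast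
qed

end
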